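(* Let $|q|<1$, let $x\neq 0$ and $y$ be complex numbers, and let $n,m\ge 0$ be integers. Then $$\sum_{k=0}^n\sum_{l=0}^m {n\brack k}{m\brack l}(y;q)_k(y/x;q)_l\,x^l\,h_{n+m-k-l}(x,y|q)=\sum_{k=0}^n\sum_{l=0}^m {n\brack k}{m\brack l}(y;q)_k(y/x;q)_l\,(xq^k)^l\,h_{n-k}(x,y|q)\,h_{m-l}(x,y|q).$$
   Context: Throughout $|q|<1$. $(a;q)_n=\prod_{j=0}^{n-1}(1-aq^j)$ and ${n\brack k}=\frac{(q;q)_n}{(q;q)_k(q;q)_{n-k}}$. $P_n(x,y)=(x-y)(x-qy)\cdots(x-q^{n-1}y)$ with $P_0=1$, and $h_n(x,y|q)=\sum_{k=0}^n{n\brack k}P_k(x,y)$. (Note $(y/x;q)_l x^l$ is a polynomial in $x,y$.) *)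

theory Defs
  imports Complex_Main
begin

definition qpoch :: "complex \<Rightarrow> complex \<Rightarrow> nat \<Rightarrow> complex" where
  "qpoch a q n = (\<Prod>j<n. 1 - a * q ^ j)"

definition qbinom :: "complex \<Rightarrow> nat \<Rightarrow> nat \<Rightarrow> complex" where
  "qbinom q n k = qpoch q q n / (qpoch q q k * qpoch q q (n - k))"

definition Pq :: "complex \<Rightarrow> nat \<Rightarrow> complex \<Rightarrow> complex \<Rightarrow> complex" where
  "Pq q n x y = (\<Prod>j<n. x - q ^ j * y)"

definition hq :: "complex \<Rightarrow> nat \<Rightarrow> complex \<Rightarrow> complex \<Rightarrow> complex" where
  "hq q n x y = (\<Sum>k\<le>n. qbinom q n k * Pq q k x y)"

end

theory Submission
  imports Defs "HOL-Computational_Algebra.Formal_Power_Series"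
begin

lemma qpoch_Suc: "qpoch a q (Suc n) = qpoch a q n * (1 - a * q ^ n)"
  by (simp add: qpoch_def)

lemma Pq_Suc: "Pq q (Suc n) x y = Pq q n x y * (x - q ^ n * y)"
  by (simp add: Pq_def)

lemma Pq_0 [simp]: "Pq q 0 x y = 1" by (simp add: Pq_def)
lemma qpoch_0 [simp]: "qpoch a q 0 = 1" by (simp add: qpoch_def)

lemma qpow_ne1:
  fixes q :: complex
  assumes "norm q < 1" "n > 0"
  shows "q ^ n \<noteq> 1"
proof
  assume h: "q ^ n = 1"
  have "norm (q ^ n) = 1" using h by simp
  then have "norm q ^ n = 1" by (simp only: norm_power)
  moreover have "norm q ^ n < 1"
    using assms power_less_one_iff[of "norm q" n] by simp
  ultimately show False by simp
qed

lemma qQ_nz: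
  assumes "norm q < 1"
  shows "qpoch q q n \<noteq> 0"
proof -
  have "1 - q * q ^ j \<noteq> 0" for j
    using qpow_ne1[OF assms, of "Suc j"] by simp
  then show ?thesis by (simp add: qpoch_def)
qed

definition T :: "complex \<Rightarrow> (nat \<Rightarrow> complex) \<Rightarrow> complex fps" where
  "T q c = Abs_fps (\<lambda>n. c n / qpoch q q n)"

definition conv :: "complex \<Rightarrow> (nat \<Rightarrow> complex) \<Rightarrow> (nat \<Rightarrow> complex) \<Rightarrow> nat \<Rightarrow> complex" where
  "conv q a b n = (\<Sum>k\<le>n. qbinom q n k * a k * b (n - k))"

definition sc :: "complex \<Rightarrow> complex fps \<Rightarrow> complex fps" where
  "sc c F = Abs_fps (\<lambda>n. c ^ n * (fps_nth F n))"

lemma T_nth: "fps_nth (T q c) n = c n / qpoch q q n" by (simp add: T_def)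

lemma T_conv:
  assumes "norm q < 1"
  shows "T q (conv q a b) = T q a * T q b"
proof (rule fps_ext)
  fix n
  have "fps_nth (T q (conv q a b)) n = (\<Sum>k\<le>n. qbinom q n k * a k * b (n - k) / qpoch q q n)"
    by (simp add: T_nth conv_def sum_divide_distrib)
  also have "\<dots> = (\<Sum>k\<le>n. a k / qpoch q q k * (b (n - k) / qpoch q q (n - k)))"
    using qQ_nz[OF assms] by (intro sum.cong) (auto simp: qbinom_def field_simps)
  also have "\<dots> = (fps_nth (T q a * T q b) n)"
    by (simp add: fps_mult_nth T_nth atLeast0AtMost)
  finally show "fps_nth (T q (conv q a b)) n = (fps_nth (T q a * T q b) n)" .
qed

lemma T_inj:
  assumes "norm q < 1" "T q a = T q b"
  shows "a n = b n"
proof -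
  have "fps_nth (T q a) n = fps_nth (T q b) n" using assms by simp
  then show ?thesis using qQ_nz[OF assms(1)] by (simp add: T_nth)
qed

lemma sc_mult: "sc c (F * G) = sc c F * sc c G"
proof (rule fps_ext)
  fix n
  have "fps_nth (sc c (F * G)) n = (\<Sum>i=0..n. c ^ n * ((fps_nth F i) * (fps_nth G (n - i))))"
    by (simp add: sc_def fps_mult_nth sum_distrib_left)
  also have "\<dots> = (\<Sum>i=0..n. (c ^ i * (fps_nth F i)) * (c ^ (n - i) * (fps_nth G (n - i))))"
  proof (intro sum.cong refl)
    fix i assume "i \<in> {0..n}"
    then have "c ^ n = c ^ i * c ^ (n - i)" by (simp flip: power_add)
    then show "c ^ n * ((fps_nth F i) * (fps_nth G (n - i))) = (c ^ i * (fps_nth F i)) * (c ^ (n - i) * (fps_nth G (n - i)))"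
      by simp
  qed
  also have "\<dots> = (fps_nth (sc c F * sc c G) n)" by (simp add: sc_def fps_mult_nth)
  finally show "fps_nth (sc c (F * G)) n = (fps_nth (sc c F * sc c G) n)" .
qed

lemma sc_diff: "sc c (F - G) = sc c F - sc c G"
  by (rule fps_ext) (simp add: sc_def algebra_simps)

lemma sc_T: "sc c (T q f) = T q (\<lambda>n. c ^ n * f n)"
  by (rule fps_ext) (simp add: sc_def T_nth)

lemma sc_sum: "sc c (\<Sum>l\<in>A. fps_const (a l) * F l) = (\<Sum>l\<in>A. fps_const (a l) * sc c (F l))"
  by (rule fps_ext) (simp add: sc_def fps_sum_nth sum_distrib_left algebra_simps)

lemma lin_nth:
  fixes c :: complex and F :: "complex fps"
  shows "fps_nth ((1 - fps_const c * fps_X) * F) n = (fps_nth F n) - (if n = 0 then 0 else c * (fps_nth F (n - 1)))"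
proof -
  have "(1 - fps_const c * fps_X) * F = F - fps_const c * (fps_X * F)"
    by (simp only: left_diff_distrib mult.assoc mult_1_left)
  then show ?thesis by simp
qed

lemma uniq:
  fixes u v F G :: "complex fps"
  assumes q: "norm q < 1"
    and u0: "(fps_nth u 0) = 1" and v0: "(fps_nth v 0) = 1"
    and F: "u * sc q F = v * F" and G: "u * sc q G = v * G"
    and F0: "(fps_nth F 0) = (fps_nth G 0)"
  shows "F = G"
proof -
  define E where "E = F - G"
  have E: "u * sc q E = v * E"
    using F G by (simp add: E_def sc_diff algebra_simps)
  have "(fps_nth E n) = 0" for n
  proof (induction n rule: less_induct)
    case (less n)
    show ?case
    proof (cases n)
      case 0 then show ?thesis using F0 by (simp add: E_def)
    next
      case (Suc p)
      have a: "(fps_nth (u * sc q E) n) = q ^ n * (fps_nth E n)"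
      proof -
        have "(fps_nth (u * sc q E) n) = (\<Sum>i=0..n. (fps_nth u i) * (q ^ (n - i) * (fps_nth E (n - i))))"
          by (simp add: fps_mult_nth sc_def)
        also have "\<dots> = (\<Sum>i\<in>{0}. (fps_nth u i) * (q ^ (n - i) * (fps_nth E (n - i))))"
          using less by (intro sum.mono_neutral_right) auto
        finally show ?thesis using u0 by simp
      qed
      have b: "(fps_nth (v * E) n) = (fps_nth E n)"
      proof -
        have "(fps_nth (v * E) n) = (\<Sum>i=0..n. (fps_nth v i) * (fps_nth E (n - i)))"
          by (simp add: fps_mult_nth)
        also have "\<dots> = (\<Sum>i\<in>{0}. (fps_nth v i) * (fps_nth E (n - i)))"
          using less by (intro sum.mono_neutral_right) auto
        finally show ?thesis using v0 by simp
      qed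
      have "q ^ n * (fps_nth E n) = (fps_nth E n)" using a b E by simp
      then have "(q ^ n - 1) * (fps_nth E n) = 0" by (simp add: algebra_simps)
      moreover have "q ^ n \<noteq> 1" using qpow_ne1[OF q, of n] Suc by simp
      ultimately show ?thesis by simp
    qed
  qed
  then have "E = 0" by (simp add: fps_eq_iff)
  then show ?thesis by (simp add: E_def)
qed

lemma QP:
  assumes q: "norm q < 1"
  shows "(1 - fps_const y * fps_X) * sc q (T q (\<lambda>n. Pq q n x y))
       = (1 - fps_const x * fps_X) * T q (\<lambda>n. Pq q n x y)"
proof (rule fps_ext)
  fix n
  show "fps_nth ((1 - fps_const y * fps_X) * sc q (T q (\<lambda>n. Pq q n x y))) n
       = fps_nth ((1 - fps_const x * fps_X) * T q (\<lambda>n. Pq q n x y)) n"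
  proof (cases n)
    case 0 then show ?thesis by (simp add: lin_nth sc_T T_nth)
  next
    case (Suc p)
    have nz: "qpoch q q p \<noteq> 0" "1 - q * q ^ p \<noteq> 0"
      using qQ_nz[OF q, of p] qQ_nz[OF q, of "Suc p"] by (auto simp: qpoch_Suc)
    show ?thesis using nz
      by (simp add: Suc lin_nth sc_T T_nth qpoch_Suc Pq_Suc field_simps)
  qed
qed

lemma Qphi:
  assumes q: "norm q < 1"
  shows "sc q (T q (\<lambda>n. a ^ n)) = (1 - fps_const a * fps_X) * T q (\<lambda>n. a ^ n)"
proof (rule fps_ext)
  fix n
  show "fps_nth (sc q (T q (\<lambda>n. a ^ n))) n = fps_nth ((1 - fps_const a * fps_X) * T q (\<lambda>n. a ^ n)) n"
  proof (cases n)
    case 0 then show ?thesis by (simp add: lin_nth sc_T T_nth)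
  next
    case (Suc p)
    have nz: "qpoch q q p \<noteq> 0" "1 - q * q ^ p \<noteq> 0"
      using qQ_nz[OF q, of p] qQ_nz[OF q, of "Suc p"] by (auto simp: qpoch_Suc)
    show ?thesis using nz
      by (simp add: Suc lin_nth sc_T T_nth qpoch_Suc field_simps)
  qed
qed

lemma Dlem:
  assumes q: "norm q < 1"
  shows "fps_X * T q (\<lambda>n. c (Suc n)) = T q c - sc q (T q c)"
proof (rule fps_ext)
  fix n
  show "fps_nth (fps_X * T q (\<lambda>n. c (Suc n))) n = fps_nth (T q c - sc q (T q c)) n"
  proof (cases n)
    case 0 then show ?thesis by (simp add: sc_T T_nth)
  next
    case (Suc p)
    have nz: "qpoch q q p \<noteq> 0" "1 - q * q ^ p \<noteq> 0"
      using qQ_nz[OF q, of p] qQ_nz[OF q, of "Suc p"] by (auto simp: qpoch_Suc)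
    have aux: "Q \<noteq> 0 \<Longrightarrow> (1::complex) - b \<noteq> 0 \<Longrightarrow> d / (Q * (1 - b)) - b * d / (Q * (1 - b)) = d / Q" for Q b d
    proof -
      assume a: "Q \<noteq> 0" "(1::complex) - b \<noteq> 0"
      have "d / (Q * (1 - b)) - b * d / (Q * (1 - b)) = (d * (1 - b)) / (Q * (1 - b))"
        by (simp add: diff_divide_distrib[symmetric] algebra_simps)
      also have "\<dots> = d / Q" by (rule nonzero_mult_divide_mult_cancel_right[OF a(2)])
      finally show ?thesis .
    qed
    show ?thesis using aux[OF nz] by (simp add: Suc sc_T T_nth qpoch_Suc)
  qed
qed

lemma Ypq: "qpoch y q n = Pq q n 1 y"
  by (simp add: qpoch_def Pq_def mult.commute)

lemma hconv: "(\<lambda>n. hq q n x y) = conv q (\<lambda>k. Pq q k x y) (\<lambda>_. 1)"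
  by (simp add: fun_eq_iff hq_def conv_def)

lemma part_a:
  assumes q: "norm q < 1"
  shows "T q (\<lambda>n. hq q n x y) = T q (\<lambda>n. x ^ n) * T q (\<lambda>n. qpoch y q n)"
proof -
  have Q1: "sc q (T q (\<lambda>_. 1)) = (1 - fps_X) * T q (\<lambda>_. 1)"
    using Qphi[OF q, of 1] by simp
  have TY: "T q (\<lambda>n. qpoch y q n) = T q (\<lambda>n. Pq q n 1 y)" by (simp add: Ypq)
  have L: "T q (\<lambda>n. hq q n x y) = T q (\<lambda>k. Pq q k x y) * T q (\<lambda>_. 1)"
    by (simp only: hconv T_conv[OF q])
  define u where "u = 1 - fps_const y * (fps_X :: complex fps)"
  define v where "v = (1 - fps_const x * fps_X) * (1 - (fps_X :: complex fps))"
  have "T q (\<lambda>k. Pq q k x y) * T q (\<lambda>_. 1) = T q (\<lambda>n. x ^ n) * T q (\<lambda>n. Pq q n 1 y)"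
  proof (rule uniq[OF q, of u v])
    show "fps_nth u 0 = 1" by (simp add: u_def)
    show "fps_nth v 0 = 1" by (simp add: v_def)
    have e1: "u * sc q (T q (\<lambda>k. Pq q k x y)) = (1 - fps_const x * fps_X) * T q (\<lambda>k. Pq q k x y)"
      using QP[OF q, of y x] by (simp add: u_def)
    show "u * sc q (T q (\<lambda>k. Pq q k x y) * T q (\<lambda>_. 1)) = v * (T q (\<lambda>k. Pq q k x y) * T q (\<lambda>_. 1))"
    proof -
      have "u * sc q (T q (\<lambda>k. Pq q k x y) * T q (\<lambda>_. 1))
          = (u * sc q (T q (\<lambda>k. Pq q k x y))) * sc q (T q (\<lambda>_. 1))"
        by (simp only: sc_mult mult.assoc)
      also have "\<dots> = v * (T q (\<lambda>k. Pq q k x y) * T q (\<lambda>_. 1))"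
        unfolding e1 Q1 v_def by (simp only: mult_ac)
      finally show ?thesis .
    qed
    have e2: "u * sc q (T q (\<lambda>k. Pq q k 1 y)) = (1 - fps_X) * T q (\<lambda>k. Pq q k 1 y)"
      using QP[OF q, of y 1] by (simp add: u_def)
    have Qx: "sc q (T q (\<lambda>n. x ^ n)) = (1 - fps_const x * fps_X) * T q (\<lambda>n. x ^ n)"
      by (rule Qphi[OF q])
    show "u * sc q (T q (\<lambda>n. x ^ n) * T q (\<lambda>n. Pq q n 1 y)) = v * (T q (\<lambda>n. x ^ n) * T q (\<lambda>n. Pq q n 1 y))"
    proof -
      have "u * sc q (T q (\<lambda>n. x ^ n) * T q (\<lambda>n. Pq q n 1 y))
          = sc q (T q (\<lambda>n. x ^ n)) * (u * sc q (T q (\<lambda>k. Pq q k 1 y)))"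
        by (simp only: sc_mult mult_ac)
      also have "\<dots> = v * (T q (\<lambda>n. x ^ n) * T q (\<lambda>n. Pq q n 1 y))"
        unfolding e2 Qx v_def by (simp only: mult_ac)
      finally show ?thesis .
    qed
    show "fps_nth (T q (\<lambda>k. Pq q k x y) * T q (\<lambda>_. 1)) 0 = fps_nth (T q (\<lambda>n. x ^ n) * T q (\<lambda>n. Pq q n 1 y)) 0"
      by (simp add: T_nth)
  qed
  then show ?thesis using L TY by simp
qed

lemma qbinom_0:
  assumes q: "norm q < 1"
  shows "qbinom q n 0 = 1"
  using qQ_nz[OF q, of n] by (simp add: qbinom_def)

lemma qbinom_n:
  assumes q: "norm q < 1"
  shows "qbinom q n n = 1"
  using qQ_nz[OF q, of n] by (simp add: qbinom_def)

lemma pascal_aux: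
  fixes a b Qm Ql Qr :: complex
  assumes "Ql \<noteq> 0" "Qr \<noteq> 0" "1 - a \<noteq> 0" "1 - b \<noteq> 0"
  shows "Qm * (1 - a * b) / (Ql * (1 - a) * (Qr * (1 - b)))
       = a * (Qm / (Ql * (1 - a) * Qr)) + Qm / (Ql * (Qr * (1 - b)))"
proof -
  define A where "A = 1 - a"
  define B where "B = 1 - b"
  have a: "a = 1 - A" and b: "b = 1 - B" by (simp_all add: A_def B_def)
  have nz: "A \<noteq> 0" "B \<noteq> 0" using assms by (simp_all add: A_def B_def)
  show ?thesis unfolding a b using nz assms(1,2)
    by (simp add: field_simps)
qed

lemma qpascal:
  assumes q: "norm q < 1" and lm: "l < m"
  shows "qbinom q (Suc m) (Suc l) = q ^ Suc l * qbinom q m (Suc l) + qbinom q m l"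
proof -
  obtain r where m: "m = l + Suc r" using lm less_imp_add_positive
    by (metis add_Suc_right less_iff_Suc_add add.commute)
  have e1: "Suc m - Suc l = Suc r" "m - Suc l = r" "m - l = Suc r" using m by auto
  have pw: "q * q ^ m = (q * q ^ l) * (q * q ^ r)" using m by (simp add: power_add)
  have nz: "qpoch q q l \<noteq> 0" "qpoch q q r \<noteq> 0"
     "1 - q * q ^ l \<noteq> 0" "1 - q * q ^ r \<noteq> 0"
    using qQ_nz[OF q, of l] qQ_nz[OF q, of r]
      qQ_nz[OF q, of "Suc l"] qQ_nz[OF q, of "Suc r"] by (auto simp: qpoch_Suc)
  show ?thesis
    unfolding qbinom_def e1 qpoch_Suc pw power_Suc
    by (rule pascal_aux[OF nz])
qed

lemma pascal_sum:
  assumes q: "norm q < 1"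
  shows "(\<Sum>l\<le>Suc m. fps_const (qbinom q (Suc m) l) * c l)
       = (\<Sum>l\<le>m. fps_const (qbinom q m l) * (fps_const (q ^ l) * c l + c (Suc l)))"
proof -
  define A where "A l = fps_const (qbinom q m l) * (fps_const (q ^ l) * c l)" for l
  define B where "B l = fps_const (qbinom q m l) * c (Suc l)" for l
  have "(\<Sum>l\<le>Suc m. fps_const (qbinom q (Suc m) l) * c l)
      = c 0 + (\<Sum>l\<le>m. fps_const (qbinom q (Suc m) (Suc l)) * c (Suc l))"
    by (simp only: sum.atMost_Suc_shift) (simp add: qbinom_0[OF q])
  also have "(\<Sum>l\<le>m. fps_const (qbinom q (Suc m) (Suc l)) * c (Suc l))
      = (\<Sum>l<m. fps_const (qbinom q (Suc m) (Suc l)) * c (Suc l)) + c (Suc m)"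
    by (simp add: lessThan_Suc_atMost[symmetric] qbinom_n[OF q])
  also have "(\<Sum>l<m. fps_const (qbinom q (Suc m) (Suc l)) * c (Suc l))
      = (\<Sum>l<m. A (Suc l) + B l)"
    by (intro sum.cong refl) (simp add: A_def B_def qpascal[OF q] algebra_simps flip: fps_const_mult fps_const_add)
  also have "c 0 + ((\<Sum>l<m. A (Suc l) + B l) + c (Suc m)) = (A 0 + (\<Sum>l<m. A (Suc l))) + ((\<Sum>l<m. B l) + B m)"
    by (simp add: A_def B_def sum.distrib qbinom_0[OF q] qbinom_n[OF q])
  also have "\<dots> = (\<Sum>l\<le>m. A l) + (\<Sum>l\<le>m. B l)"
    by (simp add: sum.atMost_shift[symmetric] lessThan_Suc_atMost[symmetric])
  also have "\<dots> = (\<Sum>l\<le>m. fps_const (qbinom q m l) * (fps_const (q ^ l) * c l + c (Suc l)))"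
    by (simp add: A_def B_def sum.distrib[symmetric] algebra_simps)
  finally show ?thesis .
qed

definition Yl :: "complex \<Rightarrow> complex \<Rightarrow> nat \<Rightarrow> nat \<Rightarrow> complex" where
  "Yl q y l n = Pq q n (q ^ l) (q ^ l * y)"

definition Zm :: "complex \<Rightarrow> complex \<Rightarrow> complex \<Rightarrow> nat \<Rightarrow> complex fps" where
  "Zm q x y m = (\<Sum>l\<le>m. fps_const (qbinom q m l * Pq q l x y) * T q (Yl q y l))"

lemma Pq_scale: "Pq q n (c * a) (c * b) = c ^ n * Pq q n a b"
proof -
  have "Pq q n (c * a) (c * b) = (\<Prod>j<n. c * (a - q ^ j * b))"
    by (simp add: Pq_def algebra_simps)
  also have "\<dots> = c ^ n * Pq q n a b" by (simp add: prod.distrib Pq_def)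
  finally show ?thesis .
qed

lemma sc_Yl: "sc q (T q (Yl q y l)) = T q (Yl q y (Suc l))"
proof -
  have "(\<lambda>n. q ^ n * Yl q y l n) = Yl q y (Suc l)"
    by (rule ext) (simp add: Yl_def Pq_scale[symmetric] mult.assoc)
  then show ?thesis by (simp add: sc_T)
qed

lemma Yl_step:
  assumes q: "norm q < 1"
  shows "T q (Yl q y l) - (1 - fps_const x * fps_X) * T q (Yl q y (Suc l))
    = fps_X * (fps_const (q ^ l) * T q (Yl q y l) + fps_const (x - q ^ l * y) * T q (Yl q y (Suc l)))"
proof -
  have e: "(1 - fps_const (q ^ l * y) * fps_X) * T q (Yl q y (Suc l)) = (1 - fps_const (q ^ l) * fps_X) * T q (Yl q y l)"
    using QP[OF q, of "q ^ l * y" "q ^ l"] sc_Yl[of q y l] by (simp add: Yl_def[abs_def])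
  show ?thesis
    using e by (simp add: algebra_simps flip: fps_const_mult fps_const_sub)
qed

lemma Zstep:
  assumes q: "norm q < 1"
  shows "Zm q x y m - (1 - fps_const x * fps_X) * sc q (Zm q x y m) = fps_X * Zm q x y (Suc m)"
proof -
  have sZ: "sc q (Zm q x y m) = (\<Sum>l\<le>m. fps_const (qbinom q m l * Pq q l x y) * T q (Yl q y (Suc l)))"
    unfolding Zm_def sc_sum sc_Yl ..
  have "Zm q x y (Suc m) = (\<Sum>l\<le>Suc m. fps_const (qbinom q (Suc m) l) * (fps_const (Pq q l x y) * T q (Yl q y l)))"
    by (simp only: Zm_def fps_const_mult[symmetric] mult.assoc)
  also have "\<dots> = (\<Sum>l\<le>m. fps_const (qbinom q m l) * (fps_const (q ^ l) * (fps_const (Pq q l x y) * T q (Yl q y l))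
       + fps_const (Pq q (Suc l) x y) * T q (Yl q y (Suc l))))"
    by (rule pascal_sum[OF q])
  also have "\<dots> = (\<Sum>l\<le>m. fps_const (qbinom q m l * Pq q l x y) *
       (fps_const (q ^ l) * T q (Yl q y l) + fps_const (x - q ^ l * y) * T q (Yl q y (Suc l))))"
    by (intro sum.cong refl) (simp only: Pq_Suc fps_const_mult[symmetric] distrib_left mult_ac)
  finally have Z1: "fps_X * Zm q x y (Suc m) = (\<Sum>l\<le>m. fps_const (qbinom q m l * Pq q l x y) *
       (fps_X * (fps_const (q ^ l) * T q (Yl q y l) + fps_const (x - q ^ l * y) * T q (Yl q y (Suc l)))))"
    by (simp only: sum_distrib_left mult_ac)
  have "Zm q x y m - (1 - fps_const x * fps_X) * sc q (Zm q x y m)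
     = (\<Sum>l\<le>m. fps_const (qbinom q m l * Pq q l x y) *
       (T q (Yl q y l) - (1 - fps_const x * fps_X) * T q (Yl q y (Suc l))))"
    unfolding sZ unfolding Zm_def sum_distrib_left sum_subtractf[symmetric]
    by (intro sum.cong refl) (simp add: algebra_simps)
  also have "\<dots> = fps_X * Zm q x y (Suc m)"
    unfolding Z1 Yl_step[OF q] ..
  finally show ?thesis .
qed

lemma part_b:
  assumes q: "norm q < 1"
  shows "T q (\<lambda>n. hq q (n + m) x y) = T q (\<lambda>n. x ^ n) * Zm q x y m"
proof (induction m)
  case 0
  have "(\<lambda>n. qpoch y q n) = Yl q y 0" by (simp add: fun_eq_iff Yl_def Ypq)
  then show ?case using part_a[OF q, of x y] by (simp add: Zm_def qbinom_0[OF q])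
next
  case (Suc m)
  have "fps_X * T q (\<lambda>n. hq q (n + Suc m) x y) = fps_X * T q (\<lambda>n. hq q (Suc n + m) x y)"
    by simp
  also have "\<dots> = T q (\<lambda>n. hq q (n + m) x y) - sc q (T q (\<lambda>n. hq q (n + m) x y))"
    by (rule Dlem[OF q, of "\<lambda>n. hq q (n + m) x y"])
  also have "\<dots> = T q (\<lambda>n. x ^ n) * (Zm q x y m - (1 - fps_const x * fps_X) * sc q (Zm q x y m))"
    unfolding Suc sc_mult Qphi[OF q] by (simp add: algebra_simps)
  also have "\<dots> = fps_X * (T q (\<lambda>n. x ^ n) * Zm q x y (Suc m))"
    unfolding Zstep[OF q] by (simp add: mult_ac)
  finally show ?case by simp
qed

lemma T_lin: "T q (\<lambda>n. \<Sum>l\<in>A. a l * f l n) = (\<Sum>l\<in>A. fps_const (a l) * T q (f l))"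
  by (rule fps_ext) (simp add: T_nth fps_sum_nth sum_divide_distrib)

lemma star:
  assumes q: "norm q < 1"
  shows "conv q (\<lambda>k. qpoch y q k) (\<lambda>j. hq q (j + m) x y) n
       = (\<Sum>l\<le>m. qbinom q m l * Pq q l x y * conv q (Yl q y l) (\<lambda>j. hq q j x y) n)"
proof -
  have "T q (conv q (\<lambda>k. qpoch y q k) (\<lambda>j. hq q (j + m) x y))
      = T q (\<lambda>n. \<Sum>l\<le>m. qbinom q m l * Pq q l x y * conv q (Yl q y l) (\<lambda>j. hq q j x y) n)"
    unfolding T_lin T_conv[OF q] part_b[OF q] part_a[OF q] Zm_def
    by (simp add: sum_distrib_left mult_ac)
  then show ?thesis by (rule T_inj[OF q])
qed

lemma conv_comm:
  assumes q: "norm q < 1"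
  shows "conv q a (conv q b c) n = conv q b (conv q a c) n"
proof -
  have "T q (conv q a (conv q b c)) = T q (conv q b (conv q a c))"
    unfolding T_conv[OF q] by (simp add: mult_ac)
  then show ?thesis by (rule T_inj[OF q])
qed

lemma Px:
  assumes "x \<noteq> 0"
  shows "qpoch (y / x) q l * x ^ l = Pq q l x y"
proof -
  have "qpoch (y / x) q l * x ^ l = (\<Prod>j<l. (1 - y / x * q ^ j) * x)"
    by (simp add: qpoch_def prod.distrib)
  also have "\<dots> = Pq q l x y"
    unfolding Pq_def using assms by (intro prod.cong refl) (simp add: field_simps)
  finally show ?thesis .
qed

lemma Yl_eq: "Yl q y j k = (q ^ j) ^ k * qpoch y q k"
  using Pq_scale[of q k "q ^ j" 1 y] by (simp add: Yl_def Ypq)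

lemma pow_comm: "((q::complex) ^ j) ^ k = (q ^ k) ^ j"
  by (simp add: power_mult[symmetric] mult.commute)

theorem corollary3p2:
  fixes q x y :: complex and n m :: nat
  assumes "norm q < 1" and "x \<noteq> 0"
  shows "(\<Sum>k\<le>n. \<Sum>l\<le>m. qbinom q n k * qbinom q m l * qpoch y q k * qpoch (y / x) q l
            * x ^ l * hq q (n + m - k - l) x y)
       = (\<Sum>k\<le>n. \<Sum>l\<le>m. qbinom q n k * qbinom q m l * qpoch y q k * qpoch (y / x) q l
            * (x * q ^ k) ^ l * hq q (n - k) x y * hq q (m - l) x y)"
proof -
  note q = assms(1)
  note Px' = Px[OF assms(2)]
  define W where "W k = conv q (\<lambda>l. Pq q l x y) (conv q (\<lambda>j. (q ^ k) ^ j * Pq q j x y) (\<lambda>_. 1)) m" for k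
  define W' where "W' k = conv q (\<lambda>j. (q ^ k) ^ j * Pq q j x y) (conv q (\<lambda>l. Pq q l x y) (\<lambda>_. 1)) m" for k
  have WW: "W k = W' k" for k unfolding W_def W'_def by (rule conv_comm[OF q])
  have W'e: "W' k = (\<Sum>l\<le>m. qbinom q m l * ((q ^ k) ^ l * Pq q l x y) * hq q (m - l) x y)" for k
    unfolding W'_def hconv[symmetric] conv_def ..
  have R: "(\<Sum>k\<le>n. \<Sum>l\<le>m. qbinom q n k * qbinom q m l * qpoch y q k * qpoch (y / x) q l
            * (x * q ^ k) ^ l * hq q (n - k) x y * hq q (m - l) x y)
      = (\<Sum>k\<le>n. qbinom q n k * qpoch y q k * hq q (n - k) x y * W' k)"
    unfolding W'e sum_distrib_left
    by (intro sum.cong refl) (simp add: power_mult_distrib Px'[symmetric] mult_ac)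
  have L1: "(\<Sum>k\<le>n. \<Sum>l\<le>m. qbinom q n k * qbinom q m l * qpoch y q k * qpoch (y / x) q l
            * x ^ l * hq q (n + m - k - l) x y)
      = (\<Sum>l\<le>m. qbinom q m l * Pq q l x y * conv q (\<lambda>k. qpoch y q k) (\<lambda>j. hq q (j + (m - l)) x y) n)"
  proof -
    have "(\<Sum>k\<le>n. \<Sum>l\<le>m. qbinom q n k * qbinom q m l * qpoch y q k * qpoch (y / x) q l
            * x ^ l * hq q (n + m - k - l) x y)
       = (\<Sum>k\<le>n. \<Sum>l\<le>m. qbinom q m l * Pq q l x y * (qbinom q n k * qpoch y q k * hq q (n - k + (m - l)) x y))"
    proof (intro sum.cong refl)
      fix k l assume "k \<in> {..n}" "l \<in> {..m}"
      then have e: "n + m - k - l = n - k + (m - l)" by auto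
      show "qbinom q n k * qbinom q m l * qpoch y q k * qpoch (y / x) q l * x ^ l * hq q (n + m - k - l) x y
        = qbinom q m l * Pq q l x y * (qbinom q n k * qpoch y q k * hq q (n - k + (m - l)) x y)"
        unfolding e Px'[symmetric] by (simp add: mult_ac)
    qed
    also have "\<dots> = (\<Sum>l\<le>m. \<Sum>k\<le>n. qbinom q m l * Pq q l x y * (qbinom q n k * qpoch y q k * hq q (n - k + (m - l)) x y))"
      by (rule sum.swap)
    also have "\<dots> = (\<Sum>l\<le>m. qbinom q m l * Pq q l x y * conv q (\<lambda>k. qpoch y q k) (\<lambda>j. hq q (j + (m - l)) x y) n)"
      by (simp add: conv_def sum_distrib_left)
    finally show ?thesis .
  qed
  define F where "F l j k = qbinom q m l * Pq q l x y * (qbinom q (m - l) j * Pq q j x y *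
      (qbinom q n k * ((q ^ j) ^ k * qpoch y q k) * hq q (n - k) x y))" for l j k
  have L2: "(\<Sum>l\<le>m. qbinom q m l * Pq q l x y * conv q (\<lambda>k. qpoch y q k) (\<lambda>j. hq q (j + (m - l)) x y) n)
      = (\<Sum>l\<le>m. \<Sum>j\<le>m - l. \<Sum>k\<le>n. F l j k)"
    unfolding star[OF q] unfolding conv_def Yl_eq F_def by (simp add: sum_distrib_left)
  also have "\<dots> = (\<Sum>l\<le>m. \<Sum>k\<le>n. \<Sum>j\<le>m - l. F l j k)"
    by (intro sum.cong refl sum.swap)
  also have "\<dots> = (\<Sum>k\<le>n. \<Sum>l\<le>m. \<Sum>j\<le>m - l. F l j k)"
    by (rule sum.swap)
  also have "\<dots> = (\<Sum>k\<le>n. qbinom q n k * qpoch y q k * hq q (n - k) x y * W k)"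
    unfolding W_def conv_def sum_distrib_left
    by (intro sum.cong refl) (simp add: F_def power_mult[symmetric] mult_ac)
  finally show ?thesis using L1 R WW by simp
qed

end
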